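(* Let $n \ge d \ge 1$ and $K\ge 1$. Let $A_+^1,\ldots,A_+^K$ be $n\times n$ real symmetric positive semi-definite matrices and let $\Lambda^1,\ldots,\Lambda^K\in\Delta_+^d$. Let $U^{\mathrm{old}} \in \mathbb{R}^{n\times d}$ satisfy $(U^{\mathrm{old}})^T U^{\mathrm{old}} = I_d$. Let $M = \sum_{k=1}^K A_+^k U^{\mathrm{old}}\Lambda^k \in \mathbb{R}^{n\times d}$ and let $M = B\Sigma C^T$ be a (thin) singular value decomposition, with $B\in\mathbb{R}^{n\times d}$ having orthonormal columns (left singular vectors), $C\in\mathbb{R}^{d\times d}$ orthogonal (right singular vectors), and $\Sigma$ diagonal with nonnegative entries. Set $U^{\mathrm{new}} \equiv BC^T$. Then $(U^{\mathrm{new}})^TU^{\mathrm{new}} = I_d$ and $$\sum_{k=1}^K \left\| A_+^k - U^{\mathrm{new}}\Lambda^k (U^{\mathrm{new}})^T\right\|_F^2 \le \sum_{k=1}^K \left\| A_+^k - U^{\mathrm{old}}\Lambda^k (U^{\mathrm{old}})^T\right\|_F^2.$$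
   Context: $\Delta_+^d$ denotes the set of $d\times d$ real diagonal matrices whose diagonal entries are all nonnegative. $\|\cdot\|_F$ is the Frobenius norm. In the paper, each $A_+^k$ is the positive semi-definite part of a symmetric adjacency matrix $A^k$: if $A^k = VDV^T$ is an eigendecomposition, then $A_+^k = V D_+ V^T$ with $(D_+)_{ii}=\max(D_{ii},0)$. *)

theory Defs
  imports "HOL-Analysis.Analysis"
begin

definition frob_norm :: "real^'n^'m \<Rightarrow> real" where
  "frob_norm A = sqrt (\<Sum>i\<in>UNIV. \<Sum>j\<in>UNIV. (A $ i $ j)^2)"

definition psd :: "real^'n^'n \<Rightarrow> bool" where
  "psd A \<longleftrightarrow> transpose A = A \<and> (\<forall>x. 0 \<le> x \<bullet> (A *v x))"

text \<open>Diagonal matrix with nonnegative diagonal entries (the set Delta_+^d).\<close>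
definition nonneg_diag :: "real^'d^'d \<Rightarrow> bool" where
  "nonneg_diag L \<longleftrightarrow> (\<forall>i j. i \<noteq> j \<longrightarrow> L $ i $ j = 0) \<and> (\<forall>i. 0 \<le> L $ i $ i)"

end

theory Submission
  imports Defs
begin

lemma mm_add_r: "((A::real^'n^'m) + B) ** C = A ** C + B ** C"
  by (vector matrix_matrix_mult_def sum.distrib[symmetric] field_simps)

lemma mm_diff_r: "((A::real^'n^'m) - B) ** C = A ** C - B ** C"
  by (vector matrix_matrix_mult_def sum_subtractf[symmetric] field_simps)

lemma mm_diff_l: "(A::real^'n^'m) ** (B - C) = A ** B - A ** C"
  by (vector matrix_matrix_mult_def sum_subtractf[symmetric] field_simps)

lemma tr_add_diff: "transpose ((A::real^'n^'m) + B) = transpose A + transpose B"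
  "transpose ((A::real^'n^'m) - B) = transpose A - transpose B"
  by (vector transpose_def)+

lemma trace_transpose: "trace (transpose (A::real^'n^'n)) = trace A"
  by (simp add: trace_def transpose_def)

lemma frob_sq: "(frob_norm (X::real^'n^'m))^2 = trace (transpose X ** X)"
proof -
  have "(frob_norm X)^2 = (\<Sum>i\<in>UNIV. \<Sum>j\<in>UNIV. (X $ i $ j)^2)"
    unfolding frob_norm_def by (simp add: sum_nonneg)
  also have "\<dots> = (\<Sum>j\<in>UNIV. \<Sum>i\<in>UNIV. X $ i $ j * X $ i $ j)"
    by (subst sum.swap) (simp add: power2_eq_square)
  also have "\<dots> = trace (transpose X ** X)"
    by (simp add: trace_def matrix_matrix_mult_def transpose_def)
  finally show ?thesis .
qed

lemma nd_sym: "nonneg_diag L \<Longrightarrow> transpose L = L"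
  unfolding nonneg_diag_def transpose_def by (vector, metis)

lemma trace_diag: assumes "nonneg_diag (S::real^'d^'d)"
  shows "trace (W ** S) = (\<Sum>j\<in>UNIV. W$j$j * S$j$j)"
proof -
  have "trace (W ** S) = (\<Sum>j\<in>UNIV. \<Sum>i\<in>UNIV. W$j$i * S$i$j)"
    by (simp add: trace_def matrix_matrix_mult_def)
  also have "\<dots> = (\<Sum>j\<in>UNIV. W$j$j * S$j$j)"
  proof (rule sum.cong[OF refl])
    fix j
    have "(\<Sum>i\<in>UNIV. W$j$i * S$i$j) = (\<Sum>i\<in>UNIV. if i = j then W$j$j * S$j$j else 0)"
      using assms unfolding nonneg_diag_def by (intro sum.cong) auto
    then show "(\<Sum>i\<in>UNIV. W$j$i * S$i$j) = W$j$j * S$j$j" by simp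
  qed
  finally show ?thesis .
qed

lemma quad_entry: fixes D :: "real^'d^'n" and A :: "real^'n^'n"
  shows "(transpose D ** A ** D) $ j $ j = column j D \<bullet> (A *v column j D)"
  by (simp add: matrix_matrix_mult_def transpose_def column_def inner_vec_def
      matrix_vector_mult_def sum_distrib_left sum_distrib_right mult_ac)
     (subst sum.swap, simp add: mult_ac)

lemma quad_nonneg: fixes D :: "real^'d^'n" and A :: "real^'n^'n"
  assumes "psd A" "nonneg_diag L"
  shows "0 \<le> trace (transpose D ** A ** D ** L)"
proof -
  have "trace (transpose D ** A ** D ** L) = (\<Sum>j\<in>UNIV. (transpose D ** A ** D)$j$j * L$j$j)"
    by (rule trace_diag[OF assms(2)])
  also have "\<dots> \<ge> 0"
    using assms unfolding quad_entry psd_def nonneg_diag_def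
    by (intro sum_nonneg mult_nonneg_nonneg) auto
  finally show ?thesis .
qed

lemma cs_entry: fixes P Q :: "real^'d^'n"
  shows "(transpose P ** Q)$j$j \<le> ((transpose P ** P)$j$j + (transpose Q ** Q)$j$j) / 2"
proof -
  have "(transpose P ** Q)$j$j = (\<Sum>r\<in>UNIV. P$r$j * Q$r$j)"
    by (simp add: matrix_matrix_mult_def transpose_def)
  also have "\<dots> \<le> (\<Sum>r\<in>UNIV. (P$r$j * P$r$j + Q$r$j * Q$r$j) / 2)"
  proof (rule sum_mono)
    fix r
    have "0 \<le> (P$r$j - Q$r$j)^2" by simp
    then show "P$r$j * Q$r$j \<le> (P$r$j * P$r$j + Q$r$j * Q$r$j) / 2"
      by (simp add: power2_eq_square algebra_simps)
  qed
  also have "\<dots> = ((\<Sum>r\<in>UNIV. P$r$j * P$r$j) + (\<Sum>r\<in>UNIV. Q$r$j * Q$r$j)) / 2"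
    by (simp add: sum.distrib[symmetric] sum_divide_distrib[symmetric])
  also have "\<dots> = ((transpose P ** P)$j$j + (transpose Q ** Q)$j$j) / 2"
    by (simp add: matrix_matrix_mult_def transpose_def)
  finally show ?thesis .
qed

lemma trace_sum_right: "finite S \<Longrightarrow> trace ((X::real^'n^'m) ** sum f S) = (\<Sum>s\<in>S. trace (X ** f s))"
  by (induction S rule: finite_induct) (simp_all add: trace_0[simplified] matrix_add_ldistrib trace_add)

lemma trace_sum: "finite S \<Longrightarrow> trace (sum f S) = (\<Sum>s\<in>S. trace (f s :: real^'n^'n))"
  by (induction S rule: finite_induct) (simp_all add: trace_0[simplified] trace_add)

lemma expand_f:
  fixes A :: "real^'n^'n" and U :: "real^'d^'n" and L :: "real^'d^'d"
  assumes A: "transpose A = A" and L: "nonneg_diag L" and U: "transpose U ** U = mat 1"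
  shows "(frob_norm (A - U ** L ** transpose U))^2
     = trace (A ** A) + trace (L ** L) - 2 * trace (transpose U ** A ** U ** L)"
proof -
  define P where "P = U ** L ** transpose U"
  have LT: "transpose L = L" using nd_sym[OF L] .
  have PT: "transpose P = P" unfolding P_def
    by (simp add: matrix_transpose_mul LT matrix_mul_assoc)
  have "(frob_norm (A - P))^2 = trace ((A - P) ** (A - P))"
    by (simp add: frob_sq tr_add_diff A PT)
  also have "\<dots> = trace (A ** A) - trace (A ** P) - trace (P ** A) + trace (P ** P)"
    by (simp add: mm_diff_r mm_diff_l trace_sub)
  also have "trace (P ** A) = trace (A ** P)" by (rule trace_mul_sym)
  also have "trace (A ** P) = trace (transpose U ** A ** U ** L)"
  proof -
    have "trace (A ** P) = trace ((A ** U ** L) ** transpose U)"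
      unfolding P_def by (simp add: matrix_mul_assoc)
    also have "\<dots> = trace (transpose U ** (A ** U ** L))" by (rule trace_mul_sym)
    finally show ?thesis by (simp add: matrix_mul_assoc)
  qed
  also have "trace (P ** P) = trace (L ** L)"
  proof -
    have "P ** P = U ** L ** (transpose U ** U) ** L ** transpose U"
      unfolding P_def by (simp add: matrix_mul_assoc)
    also have "\<dots> = (U ** L ** L) ** transpose U" by (simp add: U matrix_mul_assoc)
    finally have "trace (P ** P) = trace (transpose U ** (U ** L ** L))"
      by (metis trace_mul_sym)
    also have "\<dots> = trace (L ** L)" by (simp add: matrix_mul_assoc U)
    finally show ?thesis .
  qed
  finally show ?thesis unfolding P_def by simp
qed

lemma conv_expand:
  fixes A :: "real^'n^'n" and V D :: "real^'d^'n" and L :: "real^'d^'d"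
  assumes A: "transpose A = A" and L: "nonneg_diag L"
  shows "trace (transpose (V + D) ** A ** (V + D) ** L)
     = trace (transpose V ** A ** V ** L) + 2 * trace (transpose D ** (A ** V ** L))
       + trace (transpose D ** A ** D ** L)"
proof -
  have LT: "transpose L = L" using nd_sym[OF L] .
  have c1: "trace (transpose V ** A ** D ** L) = trace (transpose D ** (A ** V ** L))"
  proof -
    have "trace (transpose V ** A ** D ** L) = trace (transpose (transpose V ** A ** D ** L))"
      by (simp add: trace_transpose)
    also have "\<dots> = trace (L ** (transpose D ** A ** V))"
      by (simp add: matrix_transpose_mul LT A matrix_mul_assoc)
    also have "\<dots> = trace ((transpose D ** A ** V) ** L)" by (rule trace_mul_sym)
    finally show ?thesis by (simp add: matrix_mul_assoc)
  qed
  have c2: "trace (transpose D ** A ** V ** L) = trace (transpose D ** (A ** V ** L))"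
    by (simp add: matrix_mul_assoc)
  show ?thesis
    by (simp add: tr_add_diff mm_add_r matrix_add_ldistrib trace_add c1 c2)
qed

lemma von_neumann_bound:
  fixes Uold B :: "real^'d^'n" and C S :: "real^'d^'d"
  assumes U: "transpose Uold ** Uold = mat 1" and B: "transpose B ** B = mat 1"
    and C: "orthogonal_matrix C" and S: "nonneg_diag S"
  shows "trace (transpose Uold ** (B ** S ** transpose C)) \<le> trace S"
proof -
  define P where "P = Uold ** C"
  define W where "W = transpose P ** B"
  have CC: "transpose C ** C = mat 1" using C by (simp add: orthogonal_matrix_def)
  have PP: "transpose P ** P = mat 1"
  proof -
    have "transpose P ** P = transpose C ** (transpose Uold ** Uold) ** C"
      unfolding P_def by (simp add: matrix_transpose_mul matrix_mul_assoc)
    then show ?thesis by (simp add: U CC)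
  qed
  have "trace (transpose Uold ** (B ** S ** transpose C))
      = trace ((transpose Uold ** B ** S) ** transpose C)" by (simp add: matrix_mul_assoc)
  also have "\<dots> = trace (transpose C ** (transpose Uold ** B ** S))" by (rule trace_mul_sym)
  also have "\<dots> = trace (W ** S)"
    unfolding W_def P_def by (simp add: matrix_transpose_mul matrix_mul_assoc)
  also have "\<dots> = (\<Sum>j\<in>UNIV. W$j$j * S$j$j)" by (rule trace_diag[OF S])
  also have "\<dots> \<le> (\<Sum>j\<in>UNIV. S$j$j)"
  proof (rule sum_mono)
    fix j
    have "W$j$j \<le> ((transpose P ** P)$j$j + (transpose B ** B)$j$j) / 2"
      unfolding W_def by (rule cs_entry)
    then have "W$j$j \<le> 1" by (simp add: PP B mat_def)
    moreover have "0 \<le> S$j$j" using S by (simp add: nonneg_diag_def)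
    ultimately show "W$j$j * S$j$j \<le> S$j$j" using mult_right_mono[of "W$j$j" 1 "S$j$j"] by simp
  qed
  also have "\<dots> = trace S" by (simp add: trace_def)
  finally show ?thesis .
qed

theorem proposition2:
  fixes K :: nat
    and A :: "nat \<Rightarrow> real^'n^'n"
    and Lam :: "nat \<Rightarrow> real^'d^'d"
    and Uold B :: "real^'d^'n"
    and C Sigma :: "real^'d^'d"
  assumes "CARD('d) \<le> CARD('n)"
    and "K \<ge> 1"
    and "\<forall>k\<in>{1..K}. psd (A k)"
    and "\<forall>k\<in>{1..K}. nonneg_diag (Lam k)"
    and "transpose Uold ** Uold = mat 1"
    and "transpose B ** B = mat 1"
    and "orthogonal_matrix C"
    and "nonneg_diag Sigma"
    and "(\<Sum>k=1..K. A k ** Uold ** Lam k) = B ** Sigma ** transpose C"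
  shows "transpose (B ** transpose C) ** (B ** transpose C) = mat 1 \<and>
         (\<Sum>k=1..K. (frob_norm (A k - (B ** transpose C) ** Lam k ** transpose (B ** transpose C)))^2)
           \<le> (\<Sum>k=1..K. (frob_norm (A k - Uold ** Lam k ** transpose Uold))^2)"
proof -
  note psdA = assms(3) and ndL = assms(4) and U = assms(5) and Bo = assms(6)
    and Co = assms(7) and S = assms(8) and Meq = assms(9)
  define Unw where "Unw = B ** transpose C"
  define D where "D = Unw - Uold"
  define M where "M = (\<Sum>k=1..K. A k ** Uold ** Lam k)"
  have CC: "transpose C ** C = mat 1" "C ** transpose C = mat 1"
    using Co by (simp_all add: orthogonal_matrix_def)
  have orth: "transpose Unw ** Unw = mat 1"
  proof -
    have "transpose Unw ** Unw = C ** (transpose B ** B) ** transpose C"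
      unfolding Unw_def by (simp add: matrix_transpose_mul matrix_mul_assoc)
    then show ?thesis by (simp add: Bo CC)
  qed
  have AT: "transpose (A k) = A k" if "k \<in> {1..K}" for k
    using psdA that by (simp add: psd_def)
  have UnD: "Unw = Uold + D" unfolding D_def by simp
  define h where "h V k = trace (transpose V ** A k ** V ** Lam k)" for V k
  define t where "t k = trace (transpose D ** (A k ** Uold ** Lam k))" for k
  have hstep: "h Unw k \<ge> h Uold k + 2 * t k" if k: "k \<in> {1..K}" for k
  proof -
    have "h Unw k = h Uold k + 2 * t k + trace (transpose D ** A k ** D ** Lam k)"
      unfolding h_def t_def UnD using conv_expand[OF AT[OF k] ndL[rule_format, OF k]] by blast
    moreover have "0 \<le> trace (transpose D ** A k ** D ** Lam k)"
      using quad_nonneg psdA ndL k by blast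
    ultimately show ?thesis by linarith
  qed
  have tsum: "(\<Sum>k=1..K. t k) = trace (transpose D ** M)"
    unfolding t_def M_def by (simp add: trace_sum_right)
  have tnew: "trace (transpose Unw ** M) = trace Sigma"
  proof -
    have "transpose Unw ** M = C ** (transpose B ** B) ** Sigma ** transpose C"
      unfolding Unw_def M_def Meq by (simp add: matrix_transpose_mul matrix_mul_assoc)
    then have "transpose Unw ** M = C ** (Sigma ** transpose C)"
      by (simp add: Bo matrix_mul_assoc)
    then have "trace (transpose Unw ** M) = trace ((Sigma ** transpose C) ** C)"
      by (metis trace_mul_sym)
    also have "\<dots> = trace Sigma" by (simp add: matrix_mul_assoc[symmetric] CC)
    finally show ?thesis .
  qed
  have told: "trace (transpose Uold ** M) \<le> trace Sigma"
    unfolding M_def Meq by (rule von_neumann_bound[OF U Bo Co S])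
  have tD: "trace (transpose D ** M) \<ge> 0"
    using tnew told unfolding D_def by (simp add: tr_add_diff mm_diff_r trace_sub)
  have hsum: "(\<Sum>k=1..K. h Unw k) \<ge> (\<Sum>k=1..K. h Uold k)"
  proof -
    have "(\<Sum>k=1..K. h Unw k) \<ge> (\<Sum>k=1..K. h Uold k + 2 * t k)"
      by (rule sum_mono) (use hstep in auto)
    also have "(\<Sum>k=1..K. h Uold k + 2 * t k) = (\<Sum>k=1..K. h Uold k) + 2 * (\<Sum>k=1..K. t k)"
      by (simp add: sum.distrib sum_distrib_left)
    finally show ?thesis using tsum tD by linarith
  qed
  have fexp: "(frob_norm (A k - V ** Lam k ** transpose V))^2
     = trace (A k ** A k) + trace (Lam k ** Lam k) - 2 * h V k"
    if "k \<in> {1..K}" "transpose V ** V = mat 1" for k and V :: "real^'d^'n"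
    unfolding h_def using expand_f[OF AT[OF that(1)] ndL[rule_format, OF that(1)] that(2)] .
  have "(\<Sum>k=1..K. (frob_norm (A k - Unw ** Lam k ** transpose Unw))^2)
      = (\<Sum>k=1..K. trace (A k ** A k) + trace (Lam k ** Lam k) - 2 * h Unw k)"
    using fexp[OF _ orth] by (intro sum.cong) auto
  also have "\<dots> \<le> (\<Sum>k=1..K. trace (A k ** A k) + trace (Lam k ** Lam k) - 2 * h Uold k)"
    using hsum by (simp add: sum_subtractf sum_distrib_left[symmetric])
  also have "\<dots> = (\<Sum>k=1..K. (frob_norm (A k - Uold ** Lam k ** transpose Uold))^2)"
    using fexp[OF _ U] by (intro sum.cong) auto
  finally show ?thesis using orth unfolding Unw_def by simp
qed

end
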